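(* Let $k\ge0$ be an integer. For every $\mathbf{n}=(n_1,\dots,n_d)\in\mathbb{Z}^d$ with $\sum_i n_i=0$ and $\sum_i|n_i|=2t$ for some integer $0\le t\le k$, the function $U\mapsto\sum_{\sigma\in S_d}\exp\!\big(i\sum_{j=1}^d n_{\sigma(j)}\varphi_j\big)$, where $e^{i\varphi_1},\dots,e^{i\varphi_d}$ are the eigenvalues of $U\in\mathrm{U}(d)$, belongs to $\mathcal{H}_k$.
   Context: $\mathcal{H}_k$ is the linear span of the functions $U\mapsto\mathrm{tr}(A\,U^{\otimes s}\otimes\bar U^{\otimes s})$ on $\mathrm{U}(d)$, where $0\le s\le k$ and $A$ is an operator on $(\mathbb{C}^d)^{\otimes 2s}$. $S_d$ is the symmetric group (the function is well-defined since it is symmetric in the eigenphases). *)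

theory Defs
  imports "HOL-Analysis.Analysis" "Jordan_Normal_Form.Matrix" "Jordan_Normal_Form.Determinant"
    "Jordan_Normal_Form.Char_Poly"
begin

definition adj :: "complex mat \<Rightarrow> complex mat" where
  "adj U = mat (dim_col U) (dim_row U) (\<lambda>(i,j). cnj (U $$ (j,i)))"

definition unitary_group :: "nat \<Rightarrow> complex mat set" where
  "unitary_group d = {U \<in> carrier_mat d d. U * adj U = 1\<^sub>m d \<and> adj U * U = 1\<^sub>m d}"

text \<open>Multi-indices of length m with entries in {0..<d}: basis labels of
  the tensor power (C^d)^{\<otimes> m}.\<close>
definition multi_idx :: "nat \<Rightarrow> nat \<Rightarrow> (nat \<Rightarrow> nat) set" where
  "multi_idx d m = PiE {0..<m} (\<lambda>_. {0..<d})"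

text \<open>Matrix entry (J,I) of U^{\<otimes>s} \<otimes> conj(U)^{\<otimes>s} on (C^d)^{\<otimes>2s}.\<close>
definition tensor_entry :: "nat \<Rightarrow> complex mat \<Rightarrow> (nat \<Rightarrow> nat) \<Rightarrow> (nat \<Rightarrow> nat) \<Rightarrow> complex" where
  "tensor_entry s U J I =
     (\<Prod>l<s. U $$ (J l, I l)) * (\<Prod>l\<in>{s..<2 * s}. cnj (U $$ (J l, I l)))"

text \<open>An operator A on (C^d)^{\<otimes>2s} is given by its matrix entries A I J
  (I, J multi-indices); the trace tr(A (U^{\<otimes>s} \<otimes> conj(U)^{\<otimes>s})).\<close>
definition tr_tensor :: "nat \<Rightarrow> nat \<Rightarrow> ((nat \<Rightarrow> nat) \<Rightarrow> (nat \<Rightarrow> nat) \<Rightarrow> complex) \<Rightarrow> complex mat \<Rightarrow> complex" where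
  "tr_tensor d s A U =
     (\<Sum>I\<in>multi_idx d (2 * s). \<Sum>J\<in>multi_idx d (2 * s). A I J * tensor_entry s U J I)"

text \<open>H_k: the complex linear span of the functions U \<mapsto> tr(A U^{\<otimes>s} \<otimes> conj(U)^{\<otimes>s}),
  0 \<le> s \<le> k (functions considered on all matrices; only their restriction to U(d) matters).\<close>
inductive_set H :: "nat \<Rightarrow> nat \<Rightarrow> (complex mat \<Rightarrow> complex) set" for d k where
  gen: "s \<le> k \<Longrightarrow> tr_tensor d s A \<in> H d k"
| zero: "(\<lambda>_. 0) \<in> H d k"
| add: "f \<in> H d k \<Longrightarrow> g \<in> H d k \<Longrightarrow> (\<lambda>U. f U + g U) \<in> H d k"
| smult: "f \<in> H d k \<Longrightarrow> (\<lambda>U. c * f U) \<in> H d k"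

end

theory Submission
  imports Defs "Jordan_Normal_Form.Schur_Decomposition"
begin


definition mono_fn :: "nat \<Rightarrow> nat \<Rightarrow> (nat\<Rightarrow>nat) \<Rightarrow> (nat\<Rightarrow>nat) \<Rightarrow> (nat\<Rightarrow>nat) \<Rightarrow> (nat\<Rightarrow>nat) \<Rightarrow> complex mat \<Rightarrow> complex" where
 "mono_fn a b r c r2 c2 U = (\<Prod>l<a. U $$ (r l, c l)) * (\<Prod>l<b. cnj (U $$ (r2 l, c2 l)))"

inductive_set Pd :: "nat \<Rightarrow> nat \<Rightarrow> nat \<Rightarrow> (complex mat \<Rightarrow> complex) set" for d a b where
  mono: "(\<And>l. l < a \<Longrightarrow> r l < d \<and> c l < d) \<Longrightarrow> (\<And>l. l < b \<Longrightarrow> r2 l < d \<and> c2 l < d)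
     \<Longrightarrow> mono_fn a b r c r2 c2 \<in> Pd d a b"
| zero: "(\<lambda>_. 0) \<in> Pd d a b"
| add: "f \<in> Pd d a b \<Longrightarrow> g \<in> Pd d a b \<Longrightarrow> (\<lambda>U. f U + g U) \<in> Pd d a b"
| smult: "f \<in> Pd d a b \<Longrightarrow> (\<lambda>U. x * f U) \<in> Pd d a b"

lemma ifmul: "(if P then (1::complex) else 0) * x = (if P then x else 0)" by simp

lemma Pd_H:
  assumes "f \<in> Pd d t t" "t \<le> k"
  shows "f \<in> H d k"
  using assms(1)
proof induct
  case (mono r c r2 c2)
  define I0 where "I0 = (\<lambda>l. if l < t then c l else if l < 2*t then c2 (l - t) else undefined)"
  define J0 where "J0 = (\<lambda>l. if l < t then r l else if l < 2*t then r2 (l - t) else undefined)"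
  define A where "A = (\<lambda>I J. if I = I0 \<and> J = J0 then (1::complex) else 0)"
  have I0: "I0 \<in> multi_idx d (2*t)" unfolding multi_idx_def I0_def using mono
    by (auto simp: PiE_def extensional_def)
  have J0: "J0 \<in> multi_idx d (2*t)" unfolding multi_idx_def J0_def using mono
    by (auto simp: PiE_def extensional_def)
  have fin: "finite (multi_idx d (2*t))" unfolding multi_idx_def by (simp add: finite_PiE)
  have eq: "tr_tensor d t A = mono_fn t t r c r2 c2"
  proof
    fix U
    have "tr_tensor d t A U = (\<Sum>I\<in>multi_idx d (2 * t). if I = I0 then tensor_entry t U J0 I else 0)"
      unfolding tr_tensor_def
    proof (rule sum.cong[OF refl])
      fix I
      show "(\<Sum>J\<in>multi_idx d (2 * t). A I J * tensor_entry t U J I) =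
         (if I = I0 then tensor_entry t U J0 I else 0)"
      proof (cases "I = I0")
        case True
        have "(\<Sum>J\<in>multi_idx d (2 * t). A I J * tensor_entry t U J I) =
           (\<Sum>J\<in>multi_idx d (2 * t). if J = J0 then tensor_entry t U J I else 0)"
          by (rule sum.cong[OF refl]) (simp add: A_def True)
        also have "\<dots> = tensor_entry t U J0 I" using J0 fin by (simp add: sum.delta')
        finally show ?thesis using True by simp
      qed (simp add: A_def)
    qed
    also have "\<dots> = tensor_entry t U J0 I0" using I0 fin by (simp add: sum.delta')
    also have "\<dots> = mono_fn t t r c r2 c2 U"
    proof -
      have 1: "(\<Prod>l<t. U $$ (J0 l, I0 l)) = (\<Prod>l<t. U $$ (r l, c l))"
        by (rule prod.cong) (auto simp: I0_def J0_def)
      have "(\<Prod>l\<in>{t..<2 * t}. cnj (U $$ (J0 l, I0 l))) = (\<Prod>l\<in>{0+t..<t+t}. cnj (U $$ (J0 l, I0 l)))"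
        by (simp add: mult_2)
      also have "\<dots> = (\<Prod>l\<in>{0..<t}. cnj (U $$ (J0 (l+t), I0 (l+t))))"
        by (rule prod.shift_bounds_nat_ivl)
      also have "\<dots> = (\<Prod>l<t. cnj (U $$ (r2 l, c2 l)))"
        by (rule prod.cong) (auto simp: I0_def J0_def)
      finally show ?thesis unfolding tensor_entry_def mono_fn_def 1 by simp
    qed
    finally show "tr_tensor d t A U = mono_fn t t r c r2 c2 U" .
  qed
  show ?case using H.gen[of t k d A] eq assms(2) by simp
qed (auto intro: H.intros)

lemma prod_split_add: "(\<Prod>l<a+a'. f l) = (\<Prod>l<a. f l) * (\<Prod>l<a'. f (a+l)) " for f :: "nat \<Rightarrow> complex"
  by (induction a') (auto simp: mult_ac)

lemma mono_mult: "mono_fn a b r c r2 c2 U * mono_fn a' b' s e s2 e2 U =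
  mono_fn (a+a') (b+b') (\<lambda>l. if l<a then r l else s (l-a)) (\<lambda>l. if l<a then c l else e (l-a))
   (\<lambda>l. if l<b then r2 l else s2 (l-b)) (\<lambda>l. if l<b then c2 l else e2 (l-b)) U"
  unfolding mono_fn_def prod_split_add by (simp add: mult_ac)

lemma Pd_mult:
  assumes "f \<in> Pd d a b" "g \<in> Pd d a' b'"
  shows "(\<lambda>U. f U * g U) \<in> Pd d (a+a') (b+b')"
  using assms(1)
proof induct
  case (mono r c r2 c2)
  show ?case using assms(2)
  proof induct
    case (mono s e s2 e2)
    show ?case unfolding mono_mult
      by (rule Pd.mono) (use mono.hyps \<open>\<And>l. l < a \<Longrightarrow> r l < d \<and> c l < d\<close> \<open>\<And>l. l < b \<Longrightarrow> r2 l < d \<and> c2 l < d\<close> in auto)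
  next
    case zero then show ?case by (simp add: Pd.zero)
  next
    case (add f g) then show ?case by (simp add: distrib_left Pd.add)
  next
    case (smult f x) then show ?case using Pd.smult[of "\<lambda>U. mono_fn a b r c r2 c2 U * f U" d "a+a'" "b+b'" x]
      by (simp add: mult_ac)
  qed
next
  case zero then show ?case by (simp add: Pd.zero)
next
  case (add f g) then show ?case by (simp add: distrib_right Pd.add)
next
  case (smult f x) then show ?case using Pd.smult[of "\<lambda>U. f U * g U" d "a+a'" "b+b'" x]
    by (simp add: mult_ac)
qed

lemma Pd_const: "(\<lambda>_. x) \<in> Pd d 0 0"
proof -
  have "mono_fn 0 0 id id id id \<in> Pd d 0 0" by (rule Pd.mono) auto
  from Pd.smult[OF this, of x] show ?thesis by (simp add: mono_fn_def)
qed

lemma Pd_entry: "i < d \<Longrightarrow> j < d \<Longrightarrow> (\<lambda>U. U $$ (i,j)) \<in> Pd d 1 0"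
proof -
  assume "i < d" "j < d"
  then have "mono_fn 1 0 (\<lambda>_. i) (\<lambda>_. j) id id \<in> Pd d 1 0" by (intro Pd.mono) auto
  moreover have "mono_fn 1 0 (\<lambda>_. i) (\<lambda>_. j) id id = (\<lambda>U. U $$ (i,j))"
    by (simp add: mono_fn_def fun_eq_iff lessThan_Suc)
  ultimately show ?thesis by simp
qed

lemma Pd_sum: "finite S \<Longrightarrow> (\<And>i. i \<in> S \<Longrightarrow> F i \<in> Pd d a b) \<Longrightarrow> (\<lambda>U. \<Sum>i\<in>S. F i U) \<in> Pd d a b"
proof (induction S rule: finite_induct)
  case empty then show ?case by (simp add: Pd.zero)
next
  case (insert x S)
  then show ?case using Pd.add[of "F x" d a b "\<lambda>U. \<Sum>i\<in>S. F i U"] by simp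
qed

lemma Pd_cnj: "f \<in> Pd d a b \<Longrightarrow> (\<lambda>U. cnj (f U)) \<in> Pd d b a"
proof (induction rule: Pd.induct)
  case (mono r c r2 c2)
  have "(\<lambda>U. cnj (mono_fn a b r c r2 c2 U)) = mono_fn b a r2 c2 r c"
    by (auto simp: mono_fn_def mult.commute)
  then show ?case using mono by (auto intro!: Pd.mono)
next
  case zero then show ?case by (simp add: Pd.zero)
next
  case (add f g) then show ?case by (simp add: Pd.add)
next
  case (smult f x) then show ?case by (simp add: Pd.smult)
qed



lemma pow_entry:
  assumes "i < d" "j < d"
  shows "\<exists>g\<in>Pd d m 0. \<forall>U\<in>carrier_mat d d. (U ^\<^sub>m m) $$ (i,j) = g U"
  using assms
proof (induction m arbitrary: j)
  case 0
  show ?case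
    by (rule bexI[of _ "\<lambda>_. if i = j then 1 else 0"]) (use 0 in \<open>auto intro: Pd_const\<close>)
next
  case (Suc m)
  have "\<forall>k\<in>{..<d}. \<exists>g\<in>Pd d m 0. \<forall>U\<in>carrier_mat d d. (U ^\<^sub>m m) $$ (i,k) = g U"
    using Suc by auto
  then obtain G where G: "\<And>k. k < d \<Longrightarrow> G k \<in> Pd d m 0"
    "\<And>k U. k < d \<Longrightarrow> U\<in>carrier_mat d d \<Longrightarrow> (U ^\<^sub>m m) $$ (i,k) = G k U"
    by (metis lessThan_iff)
  have "(\<lambda>U. \<Sum>k<d. G k U * U $$ (k,j)) \<in> Pd d (m+1) (0+0)"
    by (intro Pd_sum Pd_mult G Pd_entry Suc) auto
  moreover have "(U ^\<^sub>m Suc m) $$ (i,j) = (\<Sum>k<d. G k U * U $$ (k,j))" if "U\<in>carrier_mat d d" for U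
    using that Suc.prems G(2)[OF _ that]
    by (auto simp: scalar_prod_def lessThan_atLeast0 intro!: sum.cong)
  ultimately show ?case by auto
qed

lemma adj_carrier: "U \<in> carrier_mat n n \<Longrightarrow> adj U \<in> carrier_mat n n"
  by (auto simp: adj_def)

lemma adj_index: "i < dim_col U \<Longrightarrow> j < dim_row U \<Longrightarrow> adj U $$ (i,j) = cnj (U $$ (j,i))"
  by (auto simp: adj_def)

lemma adj_dims[simp]: "dim_row (adj U) = dim_col U" "dim_col (adj U) = dim_row U"
  by (auto simp: adj_def)

lemma adj_mult:
  assumes "A \<in> carrier_mat n n" "B \<in> carrier_mat n n"
  shows "adj (A * B) = adj B * adj A"
  by (rule eq_matI) (use assms in \<open>auto simp: adj_index scalar_prod_def mult.commute\<close>)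

lemma pow_add_mat:
  assumes "A \<in> carrier_mat n n"
  shows "A ^\<^sub>m (x + y) = A ^\<^sub>m x * A ^\<^sub>m y"
proof (induction y)
  case 0 then show ?case using assms by simp
next
  case (Suc y)
  have "A ^\<^sub>m (x + Suc y) = A ^\<^sub>m (x + y) * A" by simp
  also have "\<dots> = A ^\<^sub>m x * A ^\<^sub>m y * A" using Suc by simp
  also have "\<dots> = A ^\<^sub>m x * (A ^\<^sub>m y * A)"
    using assms by (intro assoc_mult_mat) auto
  finally show ?case by simp
qed

lemma unit_pow:
  assumes U: "U \<in> carrier_mat d d" and u: "U * adj U = 1\<^sub>m d"
  shows "U ^\<^sub>m m * adj (U ^\<^sub>m m) = 1\<^sub>m d"
proof (induction m)
  case 0 then show ?case using U by (auto simp: adj_def)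
next
  case (Suc m)
  have c: "U ^\<^sub>m m \<in> carrier_mat d d" "adj U \<in> carrier_mat d d" "adj (U ^\<^sub>m m) \<in> carrier_mat d d"
    using U by (auto intro: adj_carrier)
  have "U ^\<^sub>m Suc m * adj (U ^\<^sub>m Suc m) = (U ^\<^sub>m m * U) * (adj U * adj (U ^\<^sub>m m))"
    using adj_mult[OF c(1) U] by simp
  also have "\<dots> = U ^\<^sub>m m * ((U * adj U) * adj (U ^\<^sub>m m))"
    using c U by (simp add: assoc_mult_mat[of _ d d _ d _ d])
  also have "\<dots> = 1\<^sub>m d" using u c Suc by (simp add: left_mult_one_mat[OF c(3)])
  finally show ?case .
qed



lemma trace_comm:
  fixes A B :: "complex mat"
  assumes "A \<in> carrier_mat n n" "B \<in> carrier_mat n n"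
  shows "(\<Sum>i<n. (A*B)$$(i,i)) = (\<Sum>i<n. (B*A)$$(i,i))"
proof -
  have "(\<Sum>i<n. (A*B)$$(i,i)) = (\<Sum>i<n. \<Sum>k<n. A$$(i,k) * B$$(k,i))"
    using assms by (auto simp: scalar_prod_def lessThan_atLeast0 intro!: sum.cong)
  also have "\<dots> = (\<Sum>k<n. \<Sum>i<n. B$$(k,i) * A$$(i,k))"
    by (subst sum.swap) (rule sum.cong[OF refl], rule sum.cong[OF refl], simp add: mult.commute)
  also have "\<dots> = (\<Sum>i<n. (B*A)$$(i,i))"
    using assms by (auto simp: scalar_prod_def lessThan_atLeast0 intro!: sum.cong)
  finally show ?thesis .
qed

lemma ut_mult:
  fixes B C :: "complex mat"
  assumes B: "B \<in> carrier_mat n n" and C: "C \<in> carrier_mat n n"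
    and uB: "upper_triangular B" and uC: "upper_triangular C"
  shows "upper_triangular (B*C) \<and> (\<forall>i<n. (B*C)$$(i,i) = B$$(i,i)*C$$(i,i))"
proof
  show "upper_triangular (B*C)"
  proof
    fix i j assume ji: "j < i" and i: "i < dim_row (B*C)"
    then have "(B*C)$$(i,j) = (\<Sum>k\<in>{0..<n}. B$$(i,k) * C$$(k,j))"
      using B C by (auto simp: scalar_prod_def)
    also have "\<dots> = 0"
    proof (rule sum.neutral, rule ballI)
      fix k assume k: "k \<in> {0..<n}"
      show "B$$(i,k) * C$$(k,j) = 0"
      proof (cases "k < i")
        case True
        have "B$$(i,k) = 0" by (rule upper_triangularD[OF uB True]) (use i B in auto)
        then show ?thesis by simp
      next
        case False
        have "C$$(k,j) = 0" by (rule upper_triangularD[OF uC]) (use False ji k C in auto)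
        then show ?thesis by simp
      qed
    qed
    finally show "(B*C)$$(i,j) = 0" .
  qed
  show "\<forall>i<n. (B*C)$$(i,i) = B$$(i,i)*C$$(i,i)"
  proof (intro allI impI)
    fix i assume i: "i < n"
    then have "(B*C)$$(i,i) = (\<Sum>k\<in>{0..<n}. B$$(i,k) * C$$(k,i))"
      using B C by (auto simp: scalar_prod_def)
    also have "\<dots> = B$$(i,i) * C$$(i,i) + (\<Sum>k\<in>{0..<n}-{i}. B$$(i,k) * C$$(k,i))"
      using i by (subst sum.remove[of _ i]) auto
    also have "(\<Sum>k\<in>{0..<n}-{i}. B$$(i,k) * C$$(k,i)) = 0"
    proof (rule sum.neutral, rule ballI)
      fix k assume k: "k \<in> {0..<n}-{i}"
      show "B$$(i,k) * C$$(k,i) = 0"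
      proof (cases "k < i")
        case True
        have "B$$(i,k) = 0" by (rule upper_triangularD[OF uB True]) (use i B in auto)
        then show ?thesis by simp
      next
        case False
        have "C$$(k,i) = 0" by (rule upper_triangularD[OF uC]) (use False k C in auto)
        then show ?thesis by simp
      qed
    qed
    finally show "(B*C)$$(i,i) = B$$(i,i)*C$$(i,i)" by simp
  qed
qed

lemma ut_pow:
  fixes B :: "complex mat"
  assumes B: "B \<in> carrier_mat n n" and uB: "upper_triangular B"
  shows "upper_triangular (B ^\<^sub>m m) \<and> (\<forall>i<n. (B ^\<^sub>m m)$$(i,i) = B$$(i,i)^m)"
proof (induction m)
  case 0 then show ?case using B by auto
next
  case (Suc m)
  have "B ^\<^sub>m m \<in> carrier_mat n n" using B by auto
  from ut_mult[OF this B _ uB] Suc show ?case by (auto simp: mult.commute)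
qed

lemma trace_pow:
  fixes U :: "complex mat" and z :: "nat \<Rightarrow> complex"
  assumes U: "U \<in> carrier_mat d d"
    and cp: "char_poly U = (\<Prod>j<d. [:- z j, 1:])"
  shows "(\<Sum>i<d. (U ^\<^sub>m m)$$(i,i)) = (\<Sum>j<d. z j ^ m)"
proof -
  define es where "es = map z [0..<d]"
  have cp': "char_poly U = (\<Prod>e\<leftarrow>es. [:- e, 1:])"
    unfolding cp es_def
    by (simp add: prod.distinct_set_conv_list[symmetric] lessThan_atLeast0 comp_def)
  obtain B P Q where sd: "schur_decomposition U es = (B,P,Q)" by (cases "schur_decomposition U es")
  from schur_decomposition[OF U cp' sd]
  have w: "similar_mat_wit U B P Q" and ut: "upper_triangular B" and dg: "diag_mat B = es" by auto
  from w U have B: "B \<in> carrier_mat d d" and P: "P \<in> carrier_mat d d" and Q: "Q \<in> carrier_mat d d"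
    and QP: "Q * P = 1\<^sub>m d"
    by (auto simp: similar_mat_wit_def Let_def)
  have pw: "U ^\<^sub>m m = P * B ^\<^sub>m m * Q" using similar_mat_wit_pow_id[OF w] .
  have Bm: "B ^\<^sub>m m \<in> carrier_mat d d" using B by auto
  have "(\<Sum>i<d. (U ^\<^sub>m m)$$(i,i)) = (\<Sum>i<d. (Q * (P * B ^\<^sub>m m))$$(i,i))"
    unfolding pw by (rule trace_comm) (use P Q Bm in auto)
  also have "Q * (P * B ^\<^sub>m m) = B ^\<^sub>m m"
    using P Q Bm QP by (simp add: assoc_mult_mat[symmetric, of Q d d P d _ d] left_mult_one_mat[OF Bm])
  also have "(\<Sum>i<d. (B ^\<^sub>m m)$$(i,i)) = (\<Sum>i<d. B$$(i,i) ^ m)"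
    using ut_pow[OF B ut] by simp
  also have "\<dots> = (\<Sum>j<d. z j ^ m)"
  proof (rule sum.cong[OF refl])
    fix i assume "i \<in> {..<d}"
    then have "diag_mat B ! i = z i" using dg unfolding es_def by simp
    then show "B$$(i,i) ^ m = z i ^ m" using B \<open>i \<in> {..<d}\<close> by (simp add: diag_mat_def)
  qed
  finally show ?thesis .
qed



definition wt :: "nat \<times> nat \<Rightarrow> (nat \<Rightarrow> real) \<Rightarrow> nat \<Rightarrow> complex" where
  "wt p \<phi> y = cis (\<phi> y) ^ fst p * cnj (cis (\<phi> y)) ^ snd p"

definition pwf :: "nat \<Rightarrow> nat \<times> nat \<Rightarrow> (nat \<Rightarrow> real) \<Rightarrow> complex" where
  "pwf d p \<phi> = (\<Sum>y<d. wt p \<phi> y)"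

definition Rd :: "nat \<Rightarrow> nat \<Rightarrow> nat \<Rightarrow> ((nat \<Rightarrow> real) \<Rightarrow> complex) set" where
  "Rd d a b = {h. \<exists>g\<in>Pd d a b. \<forall>U\<in>unitary_group d. \<forall>\<phi> :: nat \<Rightarrow> real.
      char_poly U = (\<Prod>j<d. [:- cis (\<phi> j), 1:]) \<longrightarrow> g U = h \<phi>}"

lemma RdI:
  assumes "g \<in> Pd d a b"
    and "\<And>U \<phi>. U \<in> unitary_group d \<Longrightarrow> char_poly U = (\<Prod>j<d. [:- cis (\<phi> j), 1:]) \<Longrightarrow> g U = h \<phi>"
  shows "h \<in> Rd d a b"
  unfolding Rd_def using assms by blast

lemma RdE:
  assumes "h \<in> Rd d a b"
  obtains g where "g \<in> Pd d a b"
    and "\<And>U \<phi>. U \<in> unitary_group d \<Longrightarrow> char_poly U = (\<Prod>j<d. [:- cis (\<phi> j), 1:]) \<Longrightarrow> g U = h \<phi>"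
  using assms unfolding Rd_def by blast

lemma Rd_const: "(\<lambda>_. x) \<in> Rd d 0 0"
  by (rule RdI[OF Pd_const]) simp

lemma Rd_zero: "(\<lambda>_. 0) \<in> Rd d a b"
  by (rule RdI[OF Pd.zero]) simp

lemma Rd_add: "f \<in> Rd d a b \<Longrightarrow> g \<in> Rd d a b \<Longrightarrow> (\<lambda>\<phi>. f \<phi> + g \<phi>) \<in> Rd d a b"
proof -
  assume "f \<in> Rd d a b" "g \<in> Rd d a b"
  then obtain F G where F: "F \<in> Pd d a b" "\<And>U \<phi>. U \<in> unitary_group d \<Longrightarrow> char_poly U = (\<Prod>j<d. [:- cis (\<phi> j), 1:]) \<Longrightarrow> F U = f \<phi>"
    and G: "G \<in> Pd d a b" "\<And>U \<phi>. U \<in> unitary_group d \<Longrightarrow> char_poly U = (\<Prod>j<d. [:- cis (\<phi> j), 1:]) \<Longrightarrow> G U = g \<phi>"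
    by (metis RdE)
  show ?thesis by (rule RdI[OF Pd.add[OF F(1) G(1)]]) (simp add: F(2) G(2))
qed

lemma Rd_smult: "f \<in> Rd d a b \<Longrightarrow> (\<lambda>\<phi>. x * f \<phi>) \<in> Rd d a b"
proof -
  assume "f \<in> Rd d a b"
  then obtain F where F: "F \<in> Pd d a b" "\<And>U \<phi>. U \<in> unitary_group d \<Longrightarrow> char_poly U = (\<Prod>j<d. [:- cis (\<phi> j), 1:]) \<Longrightarrow> F U = f \<phi>"
    by (metis RdE)
  show ?thesis by (rule RdI[OF Pd.smult[OF F(1), of x]]) (simp add: F(2))
qed

lemma Rd_mult: "f \<in> Rd d a b \<Longrightarrow> g \<in> Rd d a' b' \<Longrightarrow> (\<lambda>\<phi>. f \<phi> * g \<phi>) \<in> Rd d (a+a') (b+b')"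
proof -
  assume "f \<in> Rd d a b" "g \<in> Rd d a' b'"
  then obtain F G where F: "F \<in> Pd d a b" "\<And>U \<phi>. U \<in> unitary_group d \<Longrightarrow> char_poly U = (\<Prod>j<d. [:- cis (\<phi> j), 1:]) \<Longrightarrow> F U = f \<phi>"
    and G: "G \<in> Pd d a' b'" "\<And>U \<phi>. U \<in> unitary_group d \<Longrightarrow> char_poly U = (\<Prod>j<d. [:- cis (\<phi> j), 1:]) \<Longrightarrow> G U = g \<phi>"
    by (metis RdE)
  show ?thesis by (rule RdI[OF Pd_mult[OF F(1) G(1)]]) (simp add: F(2) G(2))
qed

lemma Rd_diff: "f \<in> Rd d a b \<Longrightarrow> g \<in> Rd d a b \<Longrightarrow> (\<lambda>\<phi>. f \<phi> - g \<phi>) \<in> Rd d a b"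
  using Rd_add[of f d a b "\<lambda>\<phi>. (-1) * g \<phi>"] Rd_smult[of g d a b "-1"] by simp

lemma Rd_sum: "finite S \<Longrightarrow> (\<And>i. i \<in> S \<Longrightarrow> F i \<in> Rd d a b) \<Longrightarrow> (\<lambda>\<phi>. \<Sum>i\<in>S. F i \<phi>) \<in> Rd d a b"
proof (induction S rule: finite_induct)
  case empty
  then show ?case using Rd_zero by simp
next
  case (insert x S)
  then show ?case using Rd_add[of "F x" d a b "\<lambda>\<phi>. \<Sum>i\<in>S. F i \<phi>"] by simp
qed

lemma cis_cnj_mult: "cis x * cnj (cis x) = 1"
  by (simp add: cis_cnj cis_mult)

lemma pwf_Rd: "pwf d (a,b) \<in> Rd d a b"
proof -
  define G where "G = (\<lambda>m i j. SOME g. g\<in>Pd d m 0 \<and> (\<forall>U\<in>carrier_mat d d. (U ^\<^sub>m m) $$ (i,j) = g U))"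
  have G: "G m i j \<in> Pd d m 0 \<and> (\<forall>U\<in>carrier_mat d d. (U ^\<^sub>m m) $$ (i,j) = G m i j U)"
    if "i < d" "j < d" for m i j
  proof -
    have ex: "\<exists>g. g\<in>Pd d m 0 \<and> (\<forall>U\<in>carrier_mat d d. (U ^\<^sub>m m) $$ (i,j) = g U)"
      using pow_entry[OF that, of m] by blast
    show ?thesis unfolding G_def by (rule someI_ex[OF ex])
  qed
  define g where "g = (\<lambda>U. \<Sum>i<d. \<Sum>j<d. G a i j U * cnj (G b i j U))"
  have "g \<in> Pd d (a+0) (0+b)" unfolding g_def
  proof (intro Pd_sum Pd_mult Pd_cnj)
    fix i j assume "i \<in> {..<d}" "j \<in> {..<d}"
    then show "G a i j \<in> Pd d a 0" "G b i j \<in> Pd d b 0" using G by auto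
  qed auto
  then have gP: "g \<in> Pd d a b" by simp
  show ?thesis unfolding Rd_def
  proof (intro CollectI bexI[OF _ gP] ballI allI impI)
    fix U \<phi> assume Uu: "U \<in> unitary_group d" and cp: "char_poly U = (\<Prod>j<d. [:- cis (\<phi> j), 1:])"
    have U: "U \<in> carrier_mat d d" and u: "U * adj U = 1\<^sub>m d" using Uu by (auto simp: unitary_group_def)
    define z where "z = (\<lambda>j. cis (\<phi> j))"
    have zz: "z j * cnj (z j) = 1" for j unfolding z_def by (rule cis_cnj_mult)
    have Ua: "U ^\<^sub>m a \<in> carrier_mat d d" and Ub: "U ^\<^sub>m b \<in> carrier_mat d d" using U by auto
    have "g U = (\<Sum>i<d. \<Sum>j<d. (U ^\<^sub>m a) $$ (i,j) * cnj ((U ^\<^sub>m b) $$ (i,j)))"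
      unfolding g_def by (intro sum.cong refl) (use G U in auto)
    also have "\<dots> = (\<Sum>i<d. (U ^\<^sub>m a * adj (U ^\<^sub>m b)) $$ (i,i))"
    proof (rule sum.cong[OF refl])
      fix i assume i: "i \<in> {..<d}"
      have "(U ^\<^sub>m a * adj (U ^\<^sub>m b)) $$ (i,i) = row (U ^\<^sub>m a) i \<bullet> col (adj (U ^\<^sub>m b)) i"
        using i U by (intro index_mult_mat(1)) auto
      also have "\<dots> = (\<Sum>j\<in>{0..<d}. (U ^\<^sub>m a) $$ (i,j) * adj (U ^\<^sub>m b) $$ (j,i))"
        using i U by (auto simp: scalar_prod_def intro!: sum.cong)
      also have "\<dots> = (\<Sum>j<d. (U ^\<^sub>m a) $$ (i,j) * cnj ((U ^\<^sub>m b) $$ (i,j)))"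
        using i U by (auto simp: adj_index lessThan_atLeast0 intro!: sum.cong)
      finally show "(\<Sum>j<d. (U ^\<^sub>m a) $$ (i,j) * cnj ((U ^\<^sub>m b) $$ (i,j))) = (U ^\<^sub>m a * adj (U ^\<^sub>m b)) $$ (i,i)" by simp
    qed
    also have "\<dots> = pwf d (a,b) \<phi>"
    proof (cases "b \<le> a")
      case True
      have "U ^\<^sub>m a = U ^\<^sub>m (a-b) * U ^\<^sub>m b" using pow_add_mat[OF U, of "a-b" b] True by simp
      then have "U ^\<^sub>m a * adj (U ^\<^sub>m b) = U ^\<^sub>m (a-b) * (U ^\<^sub>m b * adj (U ^\<^sub>m b))"
        using U by (simp add: assoc_mult_mat[of _ d d _ d _ d] adj_carrier)
      also have "\<dots> = U ^\<^sub>m (a-b)" using unit_pow[OF U u] U by simp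
      finally have "(\<Sum>i<d. (U ^\<^sub>m a * adj (U ^\<^sub>m b)) $$ (i,i)) = (\<Sum>j<d. z j ^ (a-b))"
        using trace_pow[OF U cp[folded z_def]] by (simp add: z_def)
      also have "\<dots> = pwf d (a,b) \<phi>" unfolding pwf_def wt_def
      proof (rule sum.cong[OF refl])
        fix j
        have e: "z j ^ a = z j ^ (a-b) * z j ^ b" using True by (metis le_add_diff_inverse2 power_add)
        have "z j ^ a * cnj (z j) ^ b = z j ^ (a-b) * (z j * cnj (z j)) ^ b"
          unfolding e power_mult_distrib by (simp only: mult.assoc)
        then show "z j ^ (a-b) = cis (\<phi> j) ^ fst (a,b) * cnj (cis (\<phi> j)) ^ snd (a,b)"
          using zz unfolding z_def by simp
      qed
      finally show ?thesis .
    next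
      case False
      have "U ^\<^sub>m b = U ^\<^sub>m (b-a) * U ^\<^sub>m a" using pow_add_mat[OF U, of "b-a" a] False by simp
      then have "adj (U ^\<^sub>m b) = adj (U ^\<^sub>m a) * adj (U ^\<^sub>m (b-a))"
        using adj_mult[of "U ^\<^sub>m (b-a)" d "U ^\<^sub>m a"] U by simp
      then have "U ^\<^sub>m a * adj (U ^\<^sub>m b) = (U ^\<^sub>m a * adj (U ^\<^sub>m a)) * adj (U ^\<^sub>m (b-a))"
        using U by (simp add: assoc_mult_mat[of _ d d _ d _ d] adj_carrier)
      also have "\<dots> = adj (U ^\<^sub>m (b-a))" using unit_pow[OF U u] U
        by (simp add: left_mult_one_mat[of _ d d] adj_carrier)
      finally have "(\<Sum>i<d. (U ^\<^sub>m a * adj (U ^\<^sub>m b)) $$ (i,i)) = (\<Sum>i<d. cnj ((U ^\<^sub>m (b-a)) $$ (i,i)))"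
        using U by (auto simp: adj_index intro!: sum.cong)
      also have "\<dots> = cnj (\<Sum>i<d. (U ^\<^sub>m (b-a)) $$ (i,i))" by simp
      also have "\<dots> = cnj (\<Sum>j<d. z j ^ (b-a))"
        using trace_pow[OF U cp[folded z_def]] by (simp add: z_def)
      also have "\<dots> = pwf d (a,b) \<phi>" unfolding pwf_def wt_def cnj_sum
      proof (rule sum.cong[OF refl])
        fix j
        have e: "cnj (z j) ^ b = cnj (z j) ^ a * cnj (z j) ^ (b-a)" using False
          by (metis le_add_diff_inverse nat_le_linear power_add)
        have "z j ^ a * cnj (z j) ^ b = (z j * cnj (z j)) ^ a * cnj (z j) ^ (b-a)"
          unfolding e power_mult_distrib by (simp only: mult.assoc)
        then show "cnj (z j ^ (b-a)) = cis (\<phi> j) ^ fst (a,b) * cnj (cis (\<phi> j)) ^ snd (a,b)"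
          using zz unfolding z_def by simp
      qed
      finally show ?thesis .
    qed
    finally show "g U = pwf d (a,b) \<phi>" .
  qed
qed



definition Ed :: "nat \<Rightarrow> nat \<Rightarrow> (nat \<Rightarrow> nat) set" where
  "Ed d m = {f. inj_on f {..<m} \<and> f ` {..<m} \<subseteq> {..<d} \<and> (\<forall>i. m \<le> i \<longrightarrow> f i = i)}"

definition Sfun :: "nat \<Rightarrow> nat \<Rightarrow> (nat \<Rightarrow> nat \<times> nat) \<Rightarrow> (nat \<Rightarrow> real) \<Rightarrow> complex" where
  "Sfun d m p \<phi> = (\<Sum>f\<in>Ed d m. \<Prod>l<m. wt (p l) \<phi> (f l))"

lemma Ed_finite: "finite (Ed d m)"
proof (rule inj_on_finite[of "\<lambda>f. restrict f {..<m}" _ "PiE {..<m} (\<lambda>_. {..<d})"])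
  show "inj_on (\<lambda>f. restrict f {..<m}) (Ed d m)"
  proof (rule inj_onI)
    fix f g assume f: "f \<in> Ed d m" and g: "g \<in> Ed d m" and e: "restrict f {..<m} = restrict g {..<m}"
    show "f = g"
    proof
      fix i show "f i = g i"
      proof (cases "i < m")
        case True then show ?thesis using e by (metis lessThan_iff restrict_apply')
      next
        case False then show ?thesis using f g by (auto simp: Ed_def)
      qed
    qed
  qed
  show "(\<lambda>f. restrict f {..<m}) ` Ed d m \<subseteq> PiE {..<m} (\<lambda>_. {..<d})"
    by (auto simp: Ed_def restrict_PiE_iff image_subset_iff)
  show "finite (PiE {..<m} (\<lambda>_. {..<d}))" by (simp add: finite_PiE)
qed

lemma Ed_0: "Ed d 0 = {id}"
  by (auto simp: Ed_def)

lemma Ed_Suc_sum: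
  "(\<Sum>f\<in>Ed d (Suc m). F f) = (\<Sum>(f,y)\<in>Sigma (Ed d m) (\<lambda>f. {..<d} - f ` {..<m}). F (f(m := y)))"
proof (rule sum.reindex_bij_witness[of _ "\<lambda>(f,y). f(m := y)" "\<lambda>f. (f(m := m), f m)"])
  fix f assume f: "f \<in> Ed d (Suc m)"
  show "(case (f(m := m), f m) of (f, y) \<Rightarrow> f(m := y)) = f" by simp
  have inj: "inj_on f {..<Suc m}" and im: "f ` {..<Suc m} \<subseteq> {..<d}" and st: "\<And>i. Suc m \<le> i \<Longrightarrow> f i = i"
    using f by (auto simp: Ed_def)
  have "inj_on (f(m := m)) {..<m}"
    using inj_on_subset[OF inj, of "{..<m}"] by (auto simp: inj_on_def)
  moreover have "(f(m := m)) ` {..<m} \<subseteq> {..<d}" using im by (auto simp: image_subset_iff)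
  moreover have "\<forall>i. m \<le> i \<longrightarrow> (f(m := m)) i = i" using st by (auto simp: le_Suc_eq)
  ultimately have "f(m := m) \<in> Ed d m" by (simp add: Ed_def)
  moreover have "f m \<in> {..<d} - (f(m := m)) ` {..<m}"
  proof -
    have "f m < d" using im by auto
    moreover have "f m \<noteq> f l" if "l < m" for l
    proof
      assume "f m = f l"
      from inj_onD[OF inj this] that show False by simp
    qed
    ultimately show ?thesis by auto
  qed
  ultimately show "(f(m := m), f m) \<in> Sigma (Ed d m) (\<lambda>f. {..<d} - f ` {..<m})" by auto
next
  fix b assume b: "b \<in> Sigma (Ed d m) (\<lambda>f. {..<d} - f ` {..<m})"
  obtain f y where bfy: "b = (f,y)" by (cases b)
  have f: "f \<in> Ed d m" and y: "y < d" "y \<notin> f ` {..<m}" using b by (auto simp: bfy)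
  have inj: "inj_on f {..<m}" and im: "f ` {..<m} \<subseteq> {..<d}" and st: "\<And>i. m \<le> i \<Longrightarrow> f i = i"
    using f by (auto simp: Ed_def)
  show "((case b of (f, y) \<Rightarrow> f(m := y))(m := m), (case b of (f, y) \<Rightarrow> f(m := y)) m) = b"
  proof -
    have "(f(m:=y))(m:=m) = f" using st[of m] by (auto simp: fun_eq_iff)
    then show ?thesis by (simp add: bfy)
  qed
  have "inj_on (f(m := y)) {..<Suc m}"
    unfolding lessThan_Suc using inj y by (auto simp: inj_on_def)
  moreover have "(f(m := y)) ` {..<Suc m} \<subseteq> {..<d}" using im y by (auto simp: lessThan_Suc)
  moreover have "\<forall>i. Suc m \<le> i \<longrightarrow> (f(m := y)) i = i" using st by auto
  ultimately show "(case b of (f, y) \<Rightarrow> f(m := y)) \<in> Ed d (Suc m)" by (simp add: Ed_def bfy)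
qed auto



lemma wt_add: "wt (a + a', b + b') \<phi> y = wt (a, b) \<phi> y * wt (a', b') \<phi> y"
  unfolding wt_def by (simp add: power_add mult_ac)

lemma Sfun_Suc:
  "Sfun d (Suc m) p \<phi> = pwf d (p m) \<phi> * Sfun d m p \<phi>
     - (\<Sum>j<m. Sfun d m (p(j := (fst (p j) + fst (p m), snd (p j) + snd (p m)))) \<phi>)"
proof -
  define W where "W = (\<lambda>f. \<Prod>l<m. wt (p l) \<phi> (f l))"
  define g where "g = (\<lambda>y. wt (p m) \<phi> y)"
  define p' where "p' = (\<lambda>j. p(j := (fst (p j) + fst (p m), snd (p j) + snd (p m))))"
  have "Sfun d (Suc m) p \<phi> = (\<Sum>f\<in>Ed d (Suc m). W f * g (f m))"
    unfolding Sfun_def W_def g_def by simp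
  also have "\<dots> = (\<Sum>(f,y)\<in>Sigma (Ed d m) (\<lambda>f. {..<d} - f ` {..<m}). W (f(m := y)) * g ((f(m := y)) m))"
    by (rule Ed_Suc_sum)
  also have "\<dots> = (\<Sum>(f,y)\<in>Sigma (Ed d m) (\<lambda>f. {..<d} - f ` {..<m}). W f * g y)"
  proof (rule sum.cong[OF refl], clarify)
    fix f y
    have "W (f(m := y)) = W f" unfolding W_def by (rule prod.cong) auto
    then show "W (f(m := y)) * g ((f(m := y)) m) = W f * g y" by simp
  qed
  also have "\<dots> = (\<Sum>f\<in>Ed d m. \<Sum>y\<in>{..<d} - f ` {..<m}. W f * g y)"
    by (rule sum.Sigma[symmetric]) (auto simp: Ed_finite)
  also have "\<dots> = (\<Sum>f\<in>Ed d m. W f * pwf d (p m) \<phi> - (\<Sum>j<m. W f * g (f j)))"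
  proof (rule sum.cong[OF refl])
    fix f assume f: "f \<in> Ed d m"
    have sub: "f ` {..<m} \<subseteq> {..<d}" and inj: "inj_on f {..<m}" using f by (auto simp: Ed_def)
    have "(\<Sum>y\<in>{..<d} - f ` {..<m}. g y) = (\<Sum>y<d. g y) - (\<Sum>y\<in>f ` {..<m}. g y)"
      by (rule sum_diff) (use sub in auto)
    also have "(\<Sum>y\<in>f ` {..<m}. g y) = (\<Sum>j<m. g (f j))"
      by (rule sum.reindex[OF inj, unfolded comp_def])
    finally show "(\<Sum>y\<in>{..<d} - f ` {..<m}. W f * g y) = W f * pwf d (p m) \<phi> - (\<Sum>j<m. W f * g (f j))"
      by (simp add: sum_distrib_left[symmetric] right_diff_distrib pwf_def g_def)
  qed
  also have "\<dots> = (\<Sum>f\<in>Ed d m. W f * pwf d (p m) \<phi>) - (\<Sum>f\<in>Ed d m. \<Sum>j<m. W f * g (f j))"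
    by (rule sum_subtractf)
  also have "(\<Sum>f\<in>Ed d m. W f * pwf d (p m) \<phi>) = pwf d (p m) \<phi> * Sfun d m p \<phi>"
    by (simp add: Sfun_def W_def sum_distrib_left mult.commute)
  also have "(\<Sum>f\<in>Ed d m. \<Sum>j<m. W f * g (f j)) = (\<Sum>j<m. \<Sum>f\<in>Ed d m. W f * g (f j))"
    by (rule sum.swap)
  also have "(\<Sum>j<m. \<Sum>f\<in>Ed d m. W f * g (f j)) = (\<Sum>j<m. Sfun d m (p' j) \<phi>)"
  proof (rule sum.cong[OF refl])
    fix j assume j: "j \<in> {..<m}"
    show "(\<Sum>f\<in>Ed d m. W f * g (f j)) = Sfun d m (p' j) \<phi>"
      unfolding Sfun_def
    proof (rule sum.cong[OF refl])
      fix f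
      have "W f = wt (p j) \<phi> (f j) * (\<Prod>l\<in>{..<m}-{j}. wt (p l) \<phi> (f l))"
        unfolding W_def using j by (subst prod.remove[of _ j]) auto
      moreover have "(\<Prod>l<m. wt (p' j l) \<phi> (f l)) = wt (p' j j) \<phi> (f j) * (\<Prod>l\<in>{..<m}-{j}. wt (p' j l) \<phi> (f l))"
        using j by (subst prod.remove[of _ j]) auto
      moreover have "(\<Prod>l\<in>{..<m}-{j}. wt (p' j l) \<phi> (f l)) = (\<Prod>l\<in>{..<m}-{j}. wt (p l) \<phi> (f l))"
        by (rule prod.cong) (auto simp: p'_def)
      moreover have "wt (p' j j) \<phi> (f j) = wt (p j) \<phi> (f j) * g (f j)"
        unfolding p'_def g_def using wt_add[of "fst (p j)" "fst (p m)" "snd (p j)" "snd (p m)" \<phi> "f j"]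
        by simp
      ultimately show "W f * g (f j) = (\<Prod>l<m. wt (p' j l) \<phi> (f l))" by (simp add: mult_ac)
    qed
  qed
  finally show ?thesis unfolding p'_def .
qed

lemma Rd_cong: "h \<in> Rd d a b \<Longrightarrow> a = a' \<Longrightarrow> b = b' \<Longrightarrow> h \<in> Rd d a' b'" by simp

lemma sum_upd:
  fixes j m :: nat
  assumes "j < m"
  shows "(\<Sum>l<m. F ((p(j := q)) l)) + F (p j) = (\<Sum>l<m. F (p l)) + (F q :: nat)"
proof -
  have "(\<Sum>l<m. F ((p(j := q)) l)) = F q + (\<Sum>l\<in>{..<m}-{j}. F ((p(j := q)) l))"
    using assms by (subst sum.remove[of _ j]) auto
  moreover have "(\<Sum>l<m. F (p l)) = F (p j) + (\<Sum>l\<in>{..<m}-{j}. F (p l))"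
    using assms by (subst sum.remove[of _ j]) auto
  moreover have "(\<Sum>l\<in>{..<m}-{j}. F ((p(j := q)) l)) = (\<Sum>l\<in>{..<m}-{j}. F (p l))"
    by (rule sum.cong) auto
  ultimately show ?thesis by simp
qed

lemma Sfun_Rd: "Sfun d m p \<in> Rd d (\<Sum>l<m. fst (p l)) (\<Sum>l<m. snd (p l))"
proof (induction m arbitrary: p)
  case 0
  have "Sfun d 0 p = (\<lambda>_. 1)" by (auto simp: Sfun_def Ed_0 fun_eq_iff)
  then show ?case using Rd_const[of 1 d] by simp
next
  case (Suc m)
  define p' where "p' = (\<lambda>j. p(j := (fst (p j) + fst (p m), snd (p j) + snd (p m))))"
  have eq: "Sfun d (Suc m) p = (\<lambda>\<phi>. pwf d (p m) \<phi> * Sfun d m p \<phi> - (\<Sum>j<m. Sfun d m (p' j) \<phi>))"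
    unfolding p'_def by (rule ext, rule Sfun_Suc)
  have pw: "pwf d (p m) \<in> Rd d (fst (p m)) (snd (p m))"
    using pwf_Rd[of d "fst (p m)" "snd (p m)"] by simp
  have A: "(\<lambda>\<phi>. pwf d (p m) \<phi> * Sfun d m p \<phi>) \<in> Rd d (\<Sum>l<Suc m. fst (p l)) (\<Sum>l<Suc m. snd (p l))"
    by (rule Rd_cong[OF Rd_mult[OF pw Suc.IH[of p]]]) simp_all
  have B: "(\<lambda>\<phi>. \<Sum>j<m. Sfun d m (p' j) \<phi>) \<in> Rd d (\<Sum>l<Suc m. fst (p l)) (\<Sum>l<Suc m. snd (p l))"
  proof (rule Rd_sum)
    fix j assume j: "j \<in> {..<m}"
    have e1: "(\<Sum>l<m. fst (p' j l)) = (\<Sum>l<Suc m. fst (p l))"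
      using sum_upd[of j m fst p "(fst (p j) + fst (p m), snd (p j) + snd (p m))"] j
      unfolding p'_def by simp
    have e2: "(\<Sum>l<m. snd (p' j l)) = (\<Sum>l<Suc m. snd (p l))"
      using sum_upd[of j m snd p "(fst (p j) + fst (p m), snd (p j) + snd (p m))"] j
      unfolding p'_def by simp
    show "Sfun d m (p' j) \<in> Rd d (\<Sum>l<Suc m. fst (p l)) (\<Sum>l<Suc m. snd (p l))"
      using Suc.IH[of "p' j"] unfolding e1 e2 .
  qed simp
  show ?case unfolding eq by (rule Rd_diff[OF A B])
qed



lemma Ed_perm: "Ed d d = {\<sigma>. \<sigma> permutes {..<d}}"
proof safe
  fix f assume f: "f \<in> Ed d d"
  have inj: "inj_on f {..<d}" and im: "f ` {..<d} \<subseteq> {..<d}" and st: "\<And>i. d \<le> i \<Longrightarrow> f i = i"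
    using f by (auto simp: Ed_def)
  have "f ` {..<d} = {..<d}" by (rule endo_inj_surj[OF _ im inj]) simp
  then have "bij_betw f {..<d} {..<d}" using inj by (simp add: bij_betw_def)
  then show "f permutes {..<d}" by (rule bij_imp_permutes) (use st in auto)
next
  fix f assume f: "f permutes {..<d}"
  have "bij_betw f {..<d} {..<d}" by (rule permutes_imp_bij[OF f])
  moreover have "\<forall>i. d \<le> i \<longrightarrow> f i = i" using permutes_not_in[OF f] by auto
  ultimately show "f \<in> Ed d d" by (auto simp: Ed_def bij_betw_def)
qed

lemma exp_int: "exp (\<i> * complex_of_real (real_of_int k * x)) = cis x ^ nat k * cnj (cis x) ^ nat (-k)"
proof (cases "k \<ge> 0")
  case True
  then have k: "real_of_int k = real (nat k)" by simp
  have "exp (\<i> * complex_of_real (real_of_int k * x)) = cis (real (nat k) * x)"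
    unfolding cis_conv_exp k ..
  also have "\<dots> = cis x ^ nat k" by (rule Complex.DeMoivre[symmetric])
  finally show ?thesis using True by simp
next
  case False
  then have k: "real_of_int k * x = real (nat (-k)) * (-x)" by simp
  have "exp (\<i> * complex_of_real (real_of_int k * x)) = cis (real (nat (-k)) * (-x))"
    unfolding cis_conv_exp k ..
  also have "\<dots> = cnj (cis x) ^ nat (-k)" by (simp add: Complex.DeMoivre cis_cnj)
  finally show ?thesis using False by simp
qed

lemma target_eq:
  fixes n :: "nat \<Rightarrow> int" and \<phi> :: "nat \<Rightarrow> real"
  shows "(\<Sum>\<sigma> | \<sigma> permutes {..<d}. exp (\<i> * of_real (\<Sum>j<d. real_of_int (n (\<sigma> j)) * \<phi> j)))
       = Sfun d d (\<lambda>l. (nat (n l), nat (- n l))) \<phi>"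
proof -
  let ?G = "\<lambda>\<sigma>. exp (\<i> * of_real (\<Sum>j<d. real_of_int (n (\<sigma> j)) * \<phi> j))"
  have "(\<Sum>\<sigma> | \<sigma> permutes {..<d}. ?G \<sigma>) = (\<Sum>\<tau> | \<tau> permutes {..<d}. ?G (inv_into UNIV \<tau>))"
    by (rule sum.reindex_bij_witness[of _ "inv_into UNIV" "inv_into UNIV"])
      (auto simp: permutes_inv_inv permutes_inv)
  also have "\<dots> = (\<Sum>\<tau> | \<tau> permutes {..<d}. \<Prod>l<d. wt (nat (n l), nat (- n l)) \<phi> (\<tau> l))"
  proof (rule sum.cong[OF refl])
    fix \<tau> assume "\<tau> \<in> {\<tau>. \<tau> permutes {..<d}}"
    then have t: "\<tau> permutes {..<d}" by simp
    have "?G (inv_into UNIV \<tau>) = (\<Prod>j<d. exp (\<i> * of_real (real_of_int (n (inv_into UNIV \<tau> j)) * \<phi> j)))"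
      by (simp add: exp_sum[symmetric] sum_distrib_left)
    also have "\<dots> = (\<Prod>l<d. exp (\<i> * of_real (real_of_int (n l) * \<phi> (\<tau> l))))"
      using prod.permutes_inv[OF t, of "\<lambda>a s. exp (\<i> * of_real (real_of_int (n s) * \<phi> a))"] by simp
    also have "\<dots> = (\<Prod>l<d. wt (nat (n l), nat (- n l)) \<phi> (\<tau> l))"
    proof (rule prod.cong[OF refl])
      fix l
      show "exp (\<i> * of_real (real_of_int (n l) * \<phi> (\<tau> l))) = wt (nat (n l), nat (- n l)) \<phi> (\<tau> l)"
        unfolding wt_def fst_conv snd_conv by (rule exp_int)
    qed
    finally show "?G (inv_into UNIV \<tau>) = (\<Prod>l<d. wt (nat (n l), nat (- n l)) \<phi> (\<tau> l))" .
  qed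
  also have "\<dots> = Sfun d d (\<lambda>l. (nat (n l), nat (- n l))) \<phi>"
    unfolding Sfun_def Ed_perm by simp
  finally show ?thesis .
qed

lemma sums_t:
  fixes n :: "nat \<Rightarrow> int"
  assumes "(\<Sum>i<d. n i) = 0" and "(\<Sum>i<d. \<bar>n i\<bar>) = 2 * int t"
  shows "(\<Sum>l<d. nat (n l)) = t" "(\<Sum>l<d. nat (- n l)) = t"
proof -
  have p: "int (\<Sum>l<d. nat (n l)) = (\<Sum>l<d. max (n l) 0)" unfolding of_nat_sum by (rule sum.cong) auto
  have m: "int (\<Sum>l<d. nat (- n l)) = (\<Sum>l<d. max (- n l) 0)" unfolding of_nat_sum by (rule sum.cong) auto
  have "(\<Sum>l<d. max (n l) 0) - (\<Sum>l<d. max (- n l) 0) = (\<Sum>l<d. n l)"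
  proof -
    have "\<And>l. max (n l) 0 - max (- n l) 0 = n l" by (simp add: max_def)
    then show ?thesis by (simp add: sum_subtractf[symmetric])
  qed
  moreover have "(\<Sum>l<d. max (n l) 0) + (\<Sum>l<d. max (- n l) 0) = (\<Sum>l<d. \<bar>n l\<bar>)"
  proof -
    have "\<And>l. max (n l) 0 + max (- n l) 0 = \<bar>n l\<bar>" by (simp add: max_def)
    then show ?thesis by (simp add: sum.distrib[symmetric])
  qed
  ultimately have A: "(\<Sum>l<d. max (n l) 0) = int t" and B: "(\<Sum>l<d. max (- n l) 0) = int t"
    using assms by linarith+
  show "(\<Sum>l<d. nat (n l)) = t" using p A by (metis of_nat_eq_iff)
  show "(\<Sum>l<d. nat (- n l)) = t" using m B by (metis of_nat_eq_iff)
qed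

theorem lemma14:
  fixes d k t :: nat and n :: "nat \<Rightarrow> int"
  assumes "(\<Sum>i<d. n i) = 0"
    and "(\<Sum>i<d. \<bar>n i\<bar>) = 2 * int t"
    and "t \<le> k"
  shows "\<exists>f \<in> H d k. \<forall>U \<in> unitary_group d. \<forall>\<phi> :: nat \<Rightarrow> real.
           char_poly U = (\<Prod>j<d. [:- cis (\<phi> j), 1:]) \<longrightarrow>
           f U = (\<Sum>\<sigma> | \<sigma> permutes {..<d}. exp (\<i> * of_real (\<Sum>j<d. real_of_int (n (\<sigma> j)) * \<phi> j)))"
proof -
  define p where "p = (\<lambda>l. (nat (n l), nat (- n l)))"
  have "Sfun d d p \<in> Rd d t t"
    using Sfun_Rd[of d d p] sums_t[OF assms(1,2)] unfolding p_def by simp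
  then obtain g where g: "g \<in> Pd d t t"
    and gv: "\<And>U \<phi>. U \<in> unitary_group d \<Longrightarrow> char_poly U = (\<Prod>j<d. [:- cis (\<phi> j), 1:]) \<Longrightarrow> g U = Sfun d d p \<phi>"
    by (metis RdE)
  show ?thesis
  proof (intro bexI[OF _ Pd_H[OF g assms(3)]] ballI allI impI)
    fix U \<phi> assume "U \<in> unitary_group d" "char_poly U = (\<Prod>j<d. [:- cis (\<phi> j), 1:])"
    then show "g U = (\<Sum>\<sigma> | \<sigma> permutes {..<d}. exp (\<i> * of_real (\<Sum>j<d. real_of_int (n (\<sigma> j)) * \<phi> j)))"
      using gv target_eq[where d=d and n=n and \<phi>=\<phi>] unfolding p_def by simp
  qed
qed

end
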